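(* Let $\mathcal H$ be a finite-dimensional complex Hilbert space, $\rho$ a density operator on $\mathcal H$, $V,W$ unitary operators on $\mathcal H$, and $|\phi\rangle$ any unit vector. Let $F=\operatorname{Tr}(W^{\dagger}V^{\dagger}WV\rho)$, and define $\theta_{VW}^{\phi}=\arccos\big\|\sqrt\rho\,(VW)^{\dagger}|\phi\rangle\big\|$ and $\theta_{WV}^{\phi}=\arccos\big\|\sqrt\rho\,(WV)^{\dagger}|\phi\rangle\big\|$ (the norms lie in $[0,1]$). Then $$|F|\le\cos\big(\theta^{\phi}_{VW}-\theta^{\phi}_{WV}\big).$$
   Context: $\|\cdot\|$ is the vector norm on $\mathcal H$; $\sqrt\rho$ is the positive square root of $\rho$. *)

theory Defs
  imports "HOL-Analysis.Analysis"
begin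

text \<open>A finite-dimensional complex Hilbert space is modelled as complex^'n (with 'n a
finite index type); operators are complex matrices complex^'n^'n.\<close>

definition cadj :: "complex^'n^'m \<Rightarrow> complex^'m^'n" where
  "cadj A = (\<chi> i j. cnj (A $ j $ i))"

definition ctrace :: "complex^'n^'n \<Rightarrow> complex" where
  "ctrace A = (\<Sum>i\<in>UNIV. A $ i $ i)"

definition cinner :: "complex^'n \<Rightarrow> complex^'n \<Rightarrow> complex" where
  "cinner x y = (\<Sum>i\<in>UNIV. cnj (x $ i) * y $ i)"

definition hermitian :: "complex^'n^'n \<Rightarrow> bool" where
  "hermitian A \<longleftrightarrow> cadj A = A"

definition psd :: "complex^'n^'n \<Rightarrow> bool" where
  "psd A \<longleftrightarrow> hermitian A \<and> (\<forall>x. cinner x (A *v x) \<in> \<real> \<and> 0 \<le> Re (cinner x (A *v x)))"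

definition density_op :: "complex^'n^'n \<Rightarrow> bool" where
  "density_op \<rho> \<longleftrightarrow> psd \<rho> \<and> ctrace \<rho> = 1"

definition unitary :: "complex^'n^'n \<Rightarrow> bool" where
  "unitary U \<longleftrightarrow> cadj U ** U = mat 1 \<and> U ** cadj U = mat 1"

definition psd_sqrt :: "complex^'n^'n \<Rightarrow> complex^'n^'n" where
  "psd_sqrt A = (THE S. psd S \<and> S ** S = A)"

end

theory Submission
  imports Defs
begin

lemma cinner_add_right: "cinner x (y + z) = cinner x y + cinner x z"
  by (simp add: cinner_def sum.distrib distrib_left)
lemma cinner_add_left: "cinner (x + y) z = cinner x z + cinner y z"
  by (simp add: cinner_def sum.distrib distrib_right)
lemma cinner_diff_right: "cinner x (y - z) = cinner x y - cinner x z"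
  by (simp add: cinner_def sum_subtractf right_diff_distrib)
lemma cinner_diff_left: "cinner (x - y) z = cinner x z - cinner y z"
  by (simp add: cinner_def sum_subtractf left_diff_distrib)
lemma cinner_scale_right: "cinner x (c *s y) = c * cinner x y"
  by (simp add: cinner_def sum_distrib_left mult_ac)
lemma cinner_scale_left: "cinner (c *s x) y = cnj c * cinner x y"
  by (simp add: cinner_def sum_distrib_left mult_ac)
lemma cinner_sum_right: "cinner x (sum f S) = (\<Sum>s\<in>S. cinner x (f s))"
  by (simp add: cinner_def sum_distrib_left sum.swap[of _ S])
lemma cinner_sum_left: "cinner (sum f S) y = (\<Sum>s\<in>S. cinner (f s) y)"
  by (simp add: cinner_def sum_distrib_right sum.swap[of _ S])
lemma cinner_zero_right[simp]: "cinner x 0 = 0" by (simp add: cinner_def)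
lemma cinner_zero_left[simp]: "cinner 0 x = 0" by (simp add: cinner_def)
lemma cinner_cnj: "cnj (cinner x y) = cinner y x"
  by (simp add: cinner_def mult_ac)
lemma norm_sq_vec: "norm (x::complex^'n) ^ 2 = (\<Sum>i\<in>UNIV. cmod (x$i) ^ 2)"
  by (simp add: norm_vec_def L2_set_def sum_nonneg)
lemma cinner_self: "cinner x x = of_real (norm x ^ 2)"
  unfolding norm_sq_vec cinner_def of_real_sum complex_norm_square by (simp add: mult_ac)
lemma cinner_self_Re: "Re (cinner x x) = norm x ^ 2"
  by (simp add: cinner_self)
lemma cinner_adj: "cinner x (A *v y) = cinner (cadj A *v x) y"
proof -
  have "cinner x (A *v y) = (\<Sum>i\<in>UNIV. \<Sum>j\<in>UNIV. cnj (x$i) * A$i$j * y$j)"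
    by (simp add: cinner_def matrix_vector_mult_def sum_distrib_left mult.assoc)
  also have "\<dots> = (\<Sum>j\<in>UNIV. \<Sum>i\<in>UNIV. cnj (x$i) * A$i$j * y$j)" by (rule sum.swap)
  also have "\<dots> = cinner (cadj A *v x) y"
    by (simp add: cinner_def matrix_vector_mult_def cadj_def sum_distrib_right sum_distrib_left mult_ac)
  finally show ?thesis .
qed
lemma cadj_cadj[simp]: "cadj (cadj A) = A"
  by (simp add: cadj_def vec_eq_iff)
lemma cadj_mult: "cadj (A ** B) = cadj B ** cadj A"
  by (simp add: cadj_def vec_eq_iff matrix_matrix_mult_def mult_ac)
lemma cauchy_schwarz: "cmod (cinner x y) \<le> norm x * norm y"
proof -
  have "cmod (cinner x y) \<le> (\<Sum>i\<in>UNIV. \<bar>cmod (x$i)\<bar> * \<bar>cmod (y$i)\<bar>)"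
    unfolding cinner_def by (rule order_trans[OF norm_sum]) (simp add: norm_mult)
  also have "\<dots> \<le> norm x * norm y" unfolding norm_vec_def by (rule L2_set_mult_ineq)
  finally show ?thesis .
qed
lemma cinner_herm: "hermitian A \<Longrightarrow> cinner x (A *v y) = cinner (A *v x) y"
  by (simp add: hermitian_def cinner_adj)

lemma cinner_scaleR_right: "cinner x (r *\<^sub>R y) = of_real r * cinner x y"
  by (simp add: cinner_def sum_distrib_left scaleR_conv_of_real[where 'a=complex] mult_ac)
lemma cinner_scaleR_left: "cinner (r *\<^sub>R x) y = of_real r * cinner x y"
  by (simp add: cinner_def sum_distrib_left scaleR_conv_of_real[where 'a=complex] mult_ac)
lemma mvec_scaleR: "(A::complex^'n^'m) *v (r *\<^sub>R x) = r *\<^sub>R (A *v x)"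
  by (simp add: vec_eq_iff matrix_vector_mult_def scaleR_conv_of_real[where 'a=complex] sum_distrib_left mult_ac)
lemma mvec_scale: "(A::complex^'n^'m) *v (c *s x) = c *s (A *v x)"
  by (simp add: vec_eq_iff matrix_vector_mult_def sum_distrib_left mult_ac)
lemma mvec_sum: "(A::complex^'n^'m) *v (sum f S) = (\<Sum>s\<in>S. A *v f s)"
  by (induction S rule: infinite_finite_induct) (auto simp: matrix_vector_right_distrib)
lemma mat_mvec: "mat c *v (x::complex^'n) = c *s x"
  by (simp add: vec_eq_iff matrix_vector_mult_def mat_def if_distrib if_distribR cong: if_cong)

lemma cnj_eq_Re: "cnj z = z \<Longrightarrow> z = of_real (Re z)"
  by (simp add: complex_eq_iff)

lemma herm_real: "hermitian A \<Longrightarrow> cinner x (A *v x) = of_real (Re (cinner x (A *v x)))"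
  by (rule cnj_eq_Re) (metis cinner_cnj cinner_herm)

lemma psd_real: "psd A \<Longrightarrow> cinner x (A *v x) = of_real (Re (cinner x (A *v x)))"
  unfolding psd_def using herm_real by blast

lemma zero_form:
  fixes B :: "complex^'n^'n"
  assumes h: "hermitian B"
    and pos: "\<And>t::real. 0 \<le> Re (cinner (x + t *\<^sub>R (B *v x)) (B *v (x + t *\<^sub>R (B *v x))))"
    and z: "Re (cinner x (B *v x)) = 0"
  shows "B *v x = 0"
proof -
  define y where "y = B *v x"
  define c where "c = Re (cinner y (B *v y))"
  define q where "q = norm y ^ 2"
  have e1: "cinner x (B *v y) = of_real q"
    using cinner_herm[OF h, of x y] by (simp add: y_def q_def cinner_self)
  have e2: "cinner y (B *v x) = of_real q" by (simp add: y_def q_def cinner_self)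
  have expand: "Re (cinner (x + t *\<^sub>R y) (B *v (x + t *\<^sub>R y))) = 2 * t * q + t^2 * c" for t
    using z e1 e2
    by (simp add: matrix_vector_right_distrib mvec_scaleR cinner_add_left cinner_add_right
        cinner_scaleR_left cinner_scaleR_right c_def power2_eq_square algebra_simps)
  have pos': "0 \<le> 2 * t * q + t^2 * c" for t
    using pos[of t] expand[of t] by (simp add: y_def)
  have q0: "q \<ge> 0" by (simp add: q_def)
  have "q = 0"
  proof (rule ccontr)
    assume "q \<noteq> 0" hence qp: "q > 0" using q0 by simp
    define k where "k = \<bar>c\<bar> + 1"
    have kp: "k > 0" by (simp add: k_def)
    define sv where "sv = q / k"
    have sp: "sv > 0" using qp kp by (simp add: sv_def)
    have sk: "sv * k = q" using kp by (simp add: sv_def)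
    have ck: "\<bar>c\<bar> \<le> k" by (simp add: k_def)
    have "0 \<le> 2 * (-sv) * q + (-sv)^2 * c" by (rule pos')
    also have "\<dots> \<le> -2 * sv * q + sv * (sv * \<bar>c\<bar>)"
      using sp by (simp add: power2_eq_square mult_left_mono)
    also have "\<dots> \<le> -2 * sv * q + sv * q"
      using sp ck sk by (simp add: mult_left_mono flip: sk)
    also have "\<dots> < 0" using sp qp by simp
    finally show False by simp
  qed
  thus ?thesis by (simp add: q_def y_def)
qed

lemma psd_zero:
  assumes "psd S" "cinner x (S *v x) = 0"
  shows "S *v x = 0"
  using assms by (intro zero_form) (auto simp: psd_def)

definition orthonormal :: "(complex^'n) set \<Rightarrow> bool" where
  "orthonormal E \<longleftrightarrow> (\<forall>e\<in>E. \<forall>f\<in>E. cinner e f = (if e = f then 1 else 0))"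
definition eigvecs :: "complex^'n^'n \<Rightarrow> (complex^'n) set \<Rightarrow> bool" where
  "eigvecs A E \<longleftrightarrow> (\<forall>e\<in>E. A *v e = cinner e (A *v e) *s e)"
definition perp :: "(complex^'n) set \<Rightarrow> (complex^'n) set" where
  "perp E = {z. \<forall>e\<in>E. cinner e z = 0}"

lemma perp_subspace: "subspace (perp E)"
  unfolding subspace_def perp_def by (simp add: cinner_add_right cinner_scaleR_right)

lemma perp_invariant:
  assumes h: "hermitian A" and ev: "eigvecs A E" and z: "z \<in> perp E"
  shows "A *v z \<in> perp E"
proof -
  have "cinner e (A *v z) = 0" if e: "e \<in> E" for e
  proof -
    have "cinner e (A *v z) = cinner (A *v e) z" by (rule cinner_herm[OF h])
    also have "\<dots> = cinner (cinner e (A *v e) *s e) z" using ev e by (simp add: eigvecs_def)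
    also have "\<dots> = 0" using z e by (simp add: cinner_scale_left perp_def)
    finally show ?thesis .
  qed
  thus ?thesis by (simp add: perp_def)
qed

lemma cont_form: "continuous_on S (\<lambda>x::complex^'n. Re (cinner x (A *v x)))"
  unfolding cinner_def matrix_vector_mult_def
  apply (intro continuous_intros) 

done

lemma rayleigh:
  fixes A :: "complex^'n^'n"
  assumes h: "hermitian A" and ev: "eigvecs A E" and nz: "z0 \<in> perp E" "z0 \<noteq> 0"
  shows "\<exists>x\<in>perp E. norm x = 1 \<and> A *v x = cinner x (A *v x) *s x"
proof -
  define K where "K = perp E \<inter> sphere 0 1"
  define f where "f = (\<lambda>x::complex^'n. Re (cinner x (A *v x)))"
  have cK: "compact K" unfolding K_def
    by (intro closed_Int_compact closed_subspace perp_subspace compact_sphere)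
  have "(1 / norm z0) *\<^sub>R z0 \<in> K"
    using nz perp_subspace[of E] by (simp add: K_def subspace_scale)
  hence nK: "K \<noteq> {}" by auto
  have fK: "continuous_on K f" unfolding f_def by (rule cont_form)
  obtain x0 where x0: "x0 \<in> K" and mx: "\<And>y. y \<in> K \<Longrightarrow> f y \<le> f x0"
    using continuous_attains_sup[OF cK nK fK] by metis
  define l where "l = f x0"
  have x0p: "x0 \<in> perp E" and x0n: "norm x0 = 1" using x0 by (auto simp: K_def)
  have bound: "f z \<le> l * norm z ^ 2" if z: "z \<in> perp E" for z
  proof (cases "z = 0")
    case True thus ?thesis by (simp add: f_def)
  next
    case False
    define u where "u = (1 / norm z) *\<^sub>R z"
    have "u \<in> K" using z False perp_subspace[of E] by (simp add: K_def u_def subspace_scale)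
    hence "f u \<le> l" using mx by (simp add: l_def)
    moreover have "f u = f z / norm z ^ 2"
      by (simp add: f_def u_def mvec_scaleR cinner_scaleR_left cinner_scaleR_right power2_eq_square)
    ultimately show ?thesis using False by (simp add: field_simps)
  qed
  define B where "B = mat (of_real l) - A"
  have Bv: "B *v v = of_real l *s v - A *v v" for v
    by (simp add: B_def matrix_vector_mult_diff_rdistrib mat_mvec)
  have hB: "hermitian B"
    using h by (simp add: hermitian_def B_def cadj_def vec_eq_iff mat_def)
  have formB: "Re (cinner v (B *v v)) = l * norm v ^ 2 - f v" for v
    by (simp add: Bv cinner_diff_right cinner_scale_right cinner_self f_def)
  have Bx0: "B *v x0 = 0"
  proof (rule zero_form[OF hB])
    fix t :: real
    have "B *v x0 \<in> perp E"
      using x0p perp_invariant[OF h ev x0p]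
      by (simp add: Bv perp_def cinner_diff_right cinner_scale_right)
    hence "x0 + t *\<^sub>R (B *v x0) \<in> perp E"
      using x0p perp_subspace[of E] by (simp add: subspace_add subspace_scale)
    thus "0 \<le> Re (cinner (x0 + t *\<^sub>R (B *v x0)) (B *v (x0 + t *\<^sub>R (B *v x0))))"
      using bound unfolding formB by simp
  next
    show "Re (cinner x0 (B *v x0)) = 0" using x0n by (simp add: formB l_def)
  qed
  have Ax0: "A *v x0 = of_real l *s x0" using Bx0 by (simp add: Bv)
  have "cinner x0 (A *v x0) = of_real l"
    by (simp add: Ax0 cinner_scale_right cinner_self x0n)
  thus ?thesis using x0p x0n Ax0 by auto
qed

lemma zero_in_perp: "0 \<in> perp E" by (simp add: perp_def)

lemma spectral_ext:
  fixes A :: "complex^'n^'n"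
  assumes h: "hermitian A"
  shows "finite E \<Longrightarrow> orthonormal E \<Longrightarrow> eigvecs A E \<Longrightarrow>
     \<exists>E'. finite E' \<and> orthonormal E' \<and> eigvecs A E' \<and> perp E' = {0}"
proof (induction "dim (perp E)" arbitrary: E rule: less_induct)
  case less
  show ?case
  proof (cases "perp E = {0}")
    case True thus ?thesis using less.prems by blast
  next
    case False
    then obtain z0 where z0: "z0 \<in> perp E" "z0 \<noteq> 0" using zero_in_perp[of E] by blast
    obtain x where x: "x \<in> perp E" "norm x = 1" "A *v x = cinner x (A*v x) *s x"
      using rayleigh[OF h less.prems(3) z0] by blast
    have xx: "cinner x x = 1" using x(2) by (simp add: cinner_self)
    have ex: "cinner e x = 0" if "e \<in> E" for e using x(1) that by (simp add: perp_def)
    have xe: "cinner x e = 0" if "e \<in> E" for e using ex[OF that] cinner_cnj[of e x] by simp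
    have xE: "x \<notin> E" using ex xx by force
    define E1 where "E1 = insert x E"
    have orth: "orthonormal E1"
      using less.prems(2) xE ex xe xx unfolding orthonormal_def E1_def by auto
    have eig: "eigvecs A E1" using less.prems(3) x(3) by (simp add: eigvecs_def E1_def)
    have fin: "finite E1" using less.prems(1) by (simp add: E1_def)
    have s1: "perp E1 \<subseteq> perp E" by (auto simp: perp_def E1_def)
    have s2: "x \<in> perp E" "x \<notin> perp E1" using x(1) xx by (auto simp: perp_def E1_def)
    have "perp E1 \<subset> perp E" using s1 s2 by blast
    hence "span (perp E1) \<subset> span (perp E)"
      by (simp add: span_eq_iff[THEN iffD2, OF perp_subspace])
    hence "dim (perp E1) < dim (perp E)" by (rule dim_psubset)
    from less.hyps[OF this fin orth eig] show ?thesis .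
  qed
qed

lemma complete:
  assumes fin: "finite E" and orth: "orthonormal E" and p: "perp E = {0}"
  shows "z = (\<Sum>e\<in>E. cinner e z *s e)"
proof -
  define w where "w = z - (\<Sum>e\<in>E. cinner e z *s e)"
  have "cinner f w = 0" if f: "f \<in> E" for f
  proof -
    have "cinner f (\<Sum>e\<in>E. cinner e z *s e) = (\<Sum>e\<in>E. cinner e z * (if f = e then 1 else 0))"
      using orth f by (simp add: cinner_sum_right cinner_scale_right orthonormal_def)
    also have "\<dots> = cinner f z" using fin f by (simp add: if_distrib cong: if_cong)
    finally show ?thesis by (simp add: w_def cinner_diff_right)
  qed
  hence "w \<in> perp E" by (simp add: perp_def)
  thus ?thesis using p by (simp add: w_def)
qed

lemma spectral:
  fixes A :: "complex^'n^'n"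
  assumes h: "hermitian A"
  shows "\<exists>E. finite E \<and> orthonormal E \<and> eigvecs A E \<and> (\<forall>z. z = (\<Sum>e\<in>E. cinner e z *s e))"
proof -
  obtain E where "finite E" "orthonormal E" "eigvecs A E" "perp E = {0}"
    using spectral_ext[OF h, of "{}"] by (auto simp: orthonormal_def eigvecs_def)
  thus ?thesis using complete by blast
qed

definition outer :: "(complex^'n \<Rightarrow> complex) \<Rightarrow> (complex^'n) set \<Rightarrow> complex^'n^'n" where
  "outer c E = (\<chi> i j. \<Sum>e\<in>E. c e * e$i * cnj (e$j))"

lemma outer_mvec: "outer c E *v z = (\<Sum>e\<in>E. (c e * cinner e z) *s e)"
proof -
  have "(outer c E *v z) $ i = (\<Sum>e\<in>E. ((c e * cinner e z) *s e) $ i)" for i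
  proof -
    have "(outer c E *v z) $ i = (\<Sum>j\<in>UNIV. \<Sum>e\<in>E. c e * e$i * cnj (e$j) * z$j)"
      by (simp add: outer_def matrix_vector_mult_def sum_distrib_right)
    also have "\<dots> = (\<Sum>e\<in>E. \<Sum>j\<in>UNIV. c e * e$i * cnj (e$j) * z$j)" by (rule sum.swap)
    also have "\<dots> = (\<Sum>e\<in>E. ((c e * cinner e z) *s e) $ i)"
      by (simp add: cinner_def sum_distrib_left sum_distrib_right mult_ac)
    finally show ?thesis .
  qed
  thus ?thesis by (simp add: vec_eq_iff)
qed

lemma decomp:
  fixes A :: "complex^'n^'n"
  assumes ev: "eigvecs A E" and c: "\<forall>z. z = (\<Sum>e\<in>E. cinner e z *s e)"
  shows "A = outer (\<lambda>e. cinner e (A *v e)) E"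
proof -
  have "A *v z = outer (\<lambda>e. cinner e (A *v e)) E *v z" for z
  proof -
    have "A *v z = A *v (\<Sum>e\<in>E. cinner e z *s e)" using c by metis
    also have "\<dots> = (\<Sum>e\<in>E. (cinner e (A *v e) * cinner e z) *s e)"
      unfolding mvec_sum mvec_scale
    proof (rule sum.cong[OF refl])
      fix e assume "e \<in> E"
      hence "A *v e = cinner e (A *v e) *s e" using ev by (simp add: eigvecs_def)
      thus "cinner e z *s (A *v e) = (cinner e (A *v e) * cinner e z) *s e"
        by (metis vector_smult_assoc mult.commute)
    qed
    finally show ?thesis by (simp add: outer_mvec)
  qed
  thus ?thesis by (subst matrix_eq) blast
qed

lemma outer_cong: "(\<And>e. e \<in> E \<Longrightarrow> c e = d e) \<Longrightarrow> outer c E = outer d E"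
  unfolding outer_def by (simp add: vec_eq_iff)

lemma outer_herm:
  assumes "\<And>e. e \<in> E \<Longrightarrow> cnj (c e) = c e"
  shows "hermitian (outer c E)"
  unfolding hermitian_def
proof -
  have "cadj (outer c E) $ i $ j = outer c E $ i $ j" for i j
    unfolding cadj_def outer_def using assms by (simp add: mult_ac)
  thus "cadj (outer c E) = outer c E" by (simp add: vec_eq_iff)
qed

lemma outer_form: "cinner x (outer c E *v x) = (\<Sum>e\<in>E. c e * of_real (cmod (cinner e x) ^ 2))"
proof -
  have "cinner x (outer c E *v x) = (\<Sum>e\<in>E. c e * (cinner e x * cnj (cinner e x)))"
    by (simp add: outer_mvec cinner_sum_right cinner_scale_right cinner_cnj mult_ac)
  thus ?thesis by (simp only: complex_norm_square)
qed

lemma cinner_onb_sum: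
  assumes fin: "finite E" and orth: "orthonormal E" and e: "e \<in> E"
  shows "cinner e (\<Sum>f\<in>E. a f *s f) = a e"
proof -
  have "cinner e (\<Sum>f\<in>E. a f *s f) = (\<Sum>f\<in>E. a f * (if e = f then 1 else 0))"
    using orth e by (simp add: cinner_sum_right cinner_scale_right orthonormal_def)
  also have "\<dots> = a e" using fin e by (simp add: if_distrib cong: if_cong)
  finally show ?thesis .
qed

lemma outer_outer:
  assumes fin: "finite E" and orth: "orthonormal E"
  shows "outer c E ** outer d E = outer (\<lambda>e. c e * d e) E"
proof -
  have "(outer c E ** outer d E) *v z = outer (\<lambda>e. c e * d e) E *v z" for z
  proof -
    have "(outer c E ** outer d E) *v z = outer c E *v (outer d E *v z)"
      by (simp add: matrix_vector_mul_assoc)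
    also have "\<dots> = (\<Sum>e\<in>E. (c e * (d e * cinner e z)) *s e)"
      unfolding outer_mvec[of c] outer_mvec[of d]
      by (intro sum.cong refl) (simp add: cinner_onb_sum[OF fin orth])
    also have "\<dots> = outer (\<lambda>e. c e * d e) E *v z" by (simp add: outer_mvec mult_ac)
    finally show ?thesis .
  qed
  thus ?thesis by (subst matrix_eq) blast
qed

lemma sqrt_exists:
  fixes \<rho> :: "complex^'n^'n"
  assumes p: "psd \<rho>"
  shows "\<exists>S. psd S \<and> S ** S = \<rho>"
proof -
  have h: "hermitian \<rho>" using p by (simp add: psd_def)
  obtain E where fin: "finite E" and orth: "orthonormal E" and ev: "eigvecs \<rho> E"
    and c: "\<forall>z. z = (\<Sum>e\<in>E. cinner e z *s e)" using spectral[OF h] by blast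
  define l where "l = (\<lambda>e. Re (cinner e (\<rho> *v e)))"
  have l0: "l e \<ge> 0" for e using p by (simp add: psd_def l_def)
  have rho: "\<rho> = outer (\<lambda>e. of_real (l e)) E"
    using decomp[OF ev c] psd_real[OF p] by (simp add: l_def)
  define S where "S = outer (\<lambda>e. of_real (sqrt (l e))) E"
  have "S ** S = outer (\<lambda>e. of_real (sqrt (l e)) * of_real (sqrt (l e))) E"
    unfolding S_def by (rule outer_outer[OF fin orth])
  also have "\<dots> = \<rho>" unfolding rho
    by (rule outer_cong) (simp add: l0 flip: of_real_mult)
  finally have SS: "S ** S = \<rho>" .
  have hS: "hermitian S" unfolding S_def by (rule outer_herm) simp
  have "cinner x (S *v x) = of_real (\<Sum>e\<in>E. sqrt (l e) * cmod (cinner e x) ^ 2)" for x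
    unfolding S_def outer_form by simp
  hence "psd S" using hS by (simp add: psd_def l0 sum_nonneg)
  thus ?thesis using SS by blast
qed

lemma cadj_diff: "cadj (A - B) = cadj A - cadj B"
  by (simp add: cadj_def vec_eq_iff)

lemma sqrt_unique:
  fixes S T :: "complex^'n^'n"
  assumes pS: "psd S" and pT: "psd T" and eq: "S ** S = T ** T"
  shows "S = T"
proof (rule ccontr)
  assume ne: "S \<noteq> T"
  define D where "D = S - T"
  have hD: "hermitian D" using pS pT by (simp add: D_def psd_def hermitian_def cadj_diff)
  obtain E where fin: "finite E" and orth: "orthonormal E" and ev: "eigvecs D E"
    and c: "\<forall>z. z = (\<Sum>e\<in>E. cinner e z *s e)" using spectral[OF hD] by blast
  have "\<exists>x\<in>E. cinner x (D *v x) \<noteq> 0"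
  proof (rule ccontr)
    assume "\<not> ?thesis"
    hence "D = outer (\<lambda>e. 0) E" using decomp[OF ev c] by (metis outer_cong)
    hence "D = 0" by (simp add: outer_def vec_eq_iff)
    thus False using ne by (simp add: D_def)
  qed
  then obtain x where x: "x \<in> E" and m0: "cinner x (D *v x) \<noteq> 0" by blast
  define m where "m = cinner x (D *v x)"
  have Dx: "D *v x = m *s x" using ev x by (simp add: eigvecs_def m_def)
  have mr: "cnj m = m" using herm_real[OF hD, of x] by (metis m_def complex_cnj_complex_of_real)
  have xx: "cinner x x = 1" using orth x by (simp add: orthonormal_def)
  have Dv: "D *v y = S *v y - T *v y" for y by (simp add: D_def matrix_vector_mult_diff_rdistrib)
  have "S *v (D *v x) + D *v (T *v x) = S *v (S *v x) - T *v (T *v x)"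
    unfolding Dv matrix_vector_mult_diff_distrib by simp
  also have "\<dots> = (S ** S) *v x - (T ** T) *v x" by (simp only: matrix_vector_mul_assoc)
  finally have "S *v (D *v x) + D *v (T *v x) = (S ** S) *v x - (T ** T) *v x" .
  hence z: "m *s (S *v x) + D *v (T *v x) = 0" by (simp add: Dx mvec_scale eq)
  have "cinner x (D *v (T *v x)) = m * cinner x (T *v x)"
    using cinner_herm[OF hD, of x "T *v x"] by (simp add: Dx cinner_scale_left mr)
  hence "m * cinner x (S *v x) + m * cinner x (T *v x) = 0"
    using arg_cong[OF z, of "cinner x"] by (simp add: cinner_add_right cinner_scale_right)
  hence s0: "cinner x (S *v x) + cinner x (T *v x) = 0"
    using m0 by (simp add: m_def flip: distrib_left)
  have rS: "cinner x (S *v x) = of_real (Re (cinner x (S *v x)))" by (rule psd_real[OF pS])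
  have rT: "cinner x (T *v x) = of_real (Re (cinner x (T *v x)))" by (rule psd_real[OF pT])
  have gS: "Re (cinner x (S *v x)) \<ge> 0" using pS by (simp add: psd_def)
  have gT: "Re (cinner x (T *v x)) \<ge> 0" using pT by (simp add: psd_def)
  have "Re (cinner x (S *v x)) = 0" "Re (cinner x (T *v x)) = 0"
    using arg_cong[OF s0, of Re] gS gT by auto
  hence "cinner x (S *v x) = 0" "cinner x (T *v x) = 0" using rS rT by simp_all
  hence "S *v x = 0" "T *v x = 0" using psd_zero pS pT by blast+
  hence "m *s x = 0" using Dx Dv by simp
  hence "m = 0" using arg_cong[of "m *s x" 0 "cinner x"] xx by (simp add: cinner_scale_right)
  thus False using m0 m_def by simp
qed

lemma psd_sqrt_char:
  assumes "psd \<rho>"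
  shows "psd (psd_sqrt \<rho>) \<and> psd_sqrt \<rho> ** psd_sqrt \<rho> = \<rho>"
  unfolding psd_sqrt_def
proof (rule theI')
  show "\<exists>!S. psd S \<and> S ** S = \<rho>"
    using sqrt_exists[OF assms] sqrt_unique by metis
qed

lemma decomp_vec:
  fixes x y \<phi> :: "complex^'n"
  assumes "norm \<phi> = 1"
  defines "x' \<equiv> x - cinner \<phi> x *s \<phi>" and "y' \<equiv> y - cinner \<phi> y *s \<phi>"
  shows "cinner x y = cinner x' y' + cinner x \<phi> * cnj (cinner y \<phi>)"
    and "norm x' ^ 2 = norm x ^ 2 - cmod (cinner x \<phi>) ^ 2"
proof -
  have pp: "cinner \<phi> \<phi> = 1" using assms(1) by (simp add: cinner_self)
  have c1: "cinner \<phi> x = cnj (cinner x \<phi>)" by (simp add: cinner_cnj)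
  have c2: "cinner \<phi> y = cnj (cinner y \<phi>)" by (simp add: cinner_cnj)
  show "cinner x y = cinner x' y' + cinner x \<phi> * cnj (cinner y \<phi>)"
    unfolding x'_def y'_def
    by (simp add: cinner_diff_left cinner_diff_right cinner_scale_left cinner_scale_right pp c1 c2
        algebra_simps)
  have "cinner x' x' = cinner x x - cinner x \<phi> * cnj (cinner x \<phi>)"
    unfolding x'_def
    by (simp add: cinner_diff_left cinner_diff_right cinner_scale_left cinner_scale_right pp c1
        algebra_simps)
  hence "of_real (norm x' ^ 2) = (of_real (norm x ^ 2 - cmod (cinner x \<phi>) ^ 2) :: complex)"
    by (simp only: cinner_self complex_norm_square[symmetric] of_real_diff)
  thus "norm x' ^ 2 = norm x ^ 2 - cmod (cinner x \<phi>) ^ 2" by (simp only: of_real_eq_iff)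
qed

lemma key:
  fixes x y :: "complex^'n \<Rightarrow> complex^'n" and \<phi> :: "complex^'n"
  assumes fin: "finite E" and l0: "\<And>e. l e \<ge> (0::real)" and l1: "(\<Sum>e\<in>E. l e) = 1"
    and nx: "\<And>e. e \<in> E \<Longrightarrow> norm (x e) = 1" and ny: "\<And>e. e \<in> E \<Longrightarrow> norm (y e) = 1"
    and n\<phi>: "norm \<phi> = 1"
    and p: "p \<ge> 0" "p^2 = (\<Sum>e\<in>E. l e * cmod (cinner (x e) \<phi>) ^ 2)"
    and q: "q \<ge> 0" "q^2 = (\<Sum>e\<in>E. l e * cmod (cinner (y e) \<phi>) ^ 2)"
  shows "cmod (\<Sum>e\<in>E. of_real (l e) * cinner (x e) (y e)) \<le> p * q + sqrt (1 - p^2) * sqrt (1 - q^2)"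
proof -
  define a where "a e = cinner (x e) \<phi>" for e
  define b where "b e = cinner (y e) \<phi>" for e
  define x' where "x' e = x e - cinner \<phi> (x e) *s \<phi>" for e
  define y' where "y' e = y e - cinner \<phi> (y e) *s \<phi>" for e
  have split: "cinner (x e) (y e) = cinner (x' e) (y' e) + a e * cnj (b e)" for e
    unfolding x'_def y'_def a_def b_def by (rule decomp_vec(1)[OF n\<phi>])
  have nx': "norm (x' e) ^ 2 = 1 - cmod (a e) ^ 2" if "e \<in> E" for e
    using decomp_vec(2)[OF n\<phi>, of "x e"] nx[OF that] by (simp add: x'_def a_def)
  have ny': "norm (y' e) ^ 2 = 1 - cmod (b e) ^ 2" if "e \<in> E" for e
    using decomp_vec(2)[OF n\<phi>, of "y e"] ny[OF that] by (simp add: y'_def b_def)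
  have "(\<Sum>e\<in>E. of_real (l e) * cinner (x e) (y e))
      = (\<Sum>e\<in>E. of_real (l e) * cinner (x' e) (y' e)) + (\<Sum>e\<in>E. of_real (l e) * (a e * cnj (b e)))"
    by (simp add: split distrib_left sum.distrib)
  hence "cmod (\<Sum>e\<in>E. of_real (l e) * cinner (x e) (y e))
      \<le> cmod (\<Sum>e\<in>E. of_real (l e) * cinner (x' e) (y' e)) + cmod (\<Sum>e\<in>E. of_real (l e) * (a e * cnj (b e)))"
    by (simp add: norm_triangle_ineq)
  also have "cmod (\<Sum>e\<in>E. of_real (l e) * cinner (x' e) (y' e))
      \<le> (\<Sum>e\<in>E. \<bar>sqrt (l e) * norm (x' e)\<bar> * \<bar>sqrt (l e) * norm (y' e)\<bar>)"
  proof (rule order_trans[OF norm_sum], rule sum_mono)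
    fix e
    have "cmod (of_real (l e) * cinner (x' e) (y' e)) \<le> l e * (norm (x' e) * norm (y' e))"
      using l0[of e] by (simp add: norm_mult cauchy_schwarz mult_left_mono)
    also have "\<dots> = \<bar>sqrt (l e) * norm (x' e)\<bar> * \<bar>sqrt (l e) * norm (y' e)\<bar>"
      using l0[of e] by (simp add: abs_mult real_sqrt_mult[symmetric])
    finally show "cmod (of_real (l e) * cinner (x' e) (y' e)) \<le> \<dots>" .
  qed
  also have "\<dots> \<le> L2_set (\<lambda>e. sqrt (l e) * norm (x' e)) E * L2_set (\<lambda>e. sqrt (l e) * norm (y' e)) E"
    by (rule L2_set_mult_ineq)
  also have "L2_set (\<lambda>e. sqrt (l e) * norm (x' e)) E = sqrt (1 - p^2)"
  proof -
    have "(\<Sum>e\<in>E. (sqrt (l e) * norm (x' e))^2) = (\<Sum>e\<in>E. l e - l e * cmod (a e) ^ 2)"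
      using l0 nx' by (intro sum.cong) (simp_all add: power_mult_distrib right_diff_distrib)
    also have "\<dots> = 1 - p^2" using l1 p(2) by (simp add: sum_subtractf a_def)
    finally show ?thesis by (simp add: L2_set_def)
  qed
  also have "L2_set (\<lambda>e. sqrt (l e) * norm (y' e)) E = sqrt (1 - q^2)"
  proof -
    have "(\<Sum>e\<in>E. (sqrt (l e) * norm (y' e))^2) = (\<Sum>e\<in>E. l e - l e * cmod (b e) ^ 2)"
      using l0 ny' by (intro sum.cong) (simp_all add: power_mult_distrib right_diff_distrib)
    also have "\<dots> = 1 - q^2" using l1 q(2) by (simp add: sum_subtractf b_def)
    finally show ?thesis by (simp add: L2_set_def)
  qed
  also have "cmod (\<Sum>e\<in>E. of_real (l e) * (a e * cnj (b e)))
      \<le> (\<Sum>e\<in>E. \<bar>sqrt (l e) * cmod (a e)\<bar> * \<bar>sqrt (l e) * cmod (b e)\<bar>)"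
  proof (rule order_trans[OF norm_sum], rule sum_mono)
    fix e
    show "cmod (of_real (l e) * (a e * cnj (b e))) \<le> \<bar>sqrt (l e) * cmod (a e)\<bar> * \<bar>sqrt (l e) * cmod (b e)\<bar>"
    proof -
      have ss: "sqrt (l e) * sqrt (l e) = l e" using l0[of e] by simp
      have "cmod (of_real (l e) * (a e * cnj (b e))) = l e * (cmod (a e) * cmod (b e))"
        using l0[of e] by (simp add: norm_mult)
      also have "\<dots> = \<bar>sqrt (l e) * cmod (a e)\<bar> * \<bar>sqrt (l e) * cmod (b e)\<bar>"
        by (metis ss abs_mult abs_of_nonneg mult.assoc mult.left_commute norm_ge_zero real_sqrt_ge_zero l0)
      finally show ?thesis by simp
    qed
  qed
  also have "\<dots> \<le> L2_set (\<lambda>e. sqrt (l e) * cmod (a e)) E * L2_set (\<lambda>e. sqrt (l e) * cmod (b e)) E"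
    by (rule L2_set_mult_ineq)
  also have "L2_set (\<lambda>e. sqrt (l e) * cmod (a e)) E = p"
    using l0 p(1) by (simp add: L2_set_def power_mult_distrib a_def flip: p(2))
  also have "L2_set (\<lambda>e. sqrt (l e) * cmod (b e)) E = q"
    using l0 q(1) by (simp add: L2_set_def power_mult_distrib b_def flip: q(2))
  finally show ?thesis by simp
qed

lemma ctrace_outer: "ctrace (M ** outer c E) = (\<Sum>e\<in>E. c e * cinner e (M *v e))"
proof -
  have "ctrace (M ** outer c E) = (\<Sum>i\<in>UNIV. \<Sum>k\<in>UNIV. \<Sum>e\<in>E. M$i$k * (c e * e$k * cnj (e$i)))"
    by (simp add: ctrace_def matrix_matrix_mult_def outer_def sum_distrib_left)
  also have "\<dots> = (\<Sum>i\<in>UNIV. \<Sum>e\<in>E. \<Sum>k\<in>UNIV. M$i$k * (c e * e$k * cnj (e$i)))"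
    by (intro sum.cong refl sum.swap)
  also have "\<dots> = (\<Sum>e\<in>E. \<Sum>i\<in>UNIV. \<Sum>k\<in>UNIV. M$i$k * (c e * e$k * cnj (e$i)))"
    by (rule sum.swap)
  also have "\<dots> = (\<Sum>e\<in>E. c e * cinner e (M *v e))"
    by (simp add: cinner_def matrix_vector_mult_def sum_distrib_left mult_ac)
  finally show ?thesis .
qed

lemma norm_onb:
  assumes fin: "finite E" and orth: "orthonormal E"
  shows "norm (\<Sum>e\<in>E. a e *s e) ^ 2 = (\<Sum>e\<in>E. cmod (a e) ^ 2)"
proof -
  have "cinner (\<Sum>e\<in>E. a e *s e) (\<Sum>e\<in>E. a e *s e) = (\<Sum>e\<in>E. cnj (a e) * a e)"
    by (simp add: cinner_sum_left cinner_scale_left cinner_onb_sum[OF fin orth])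
  also have "\<dots> = of_real (\<Sum>e\<in>E. cmod (a e) ^ 2)"
    unfolding of_real_sum complex_norm_square by (simp add: mult.commute)
  finally have "of_real (norm (\<Sum>e\<in>E. a e *s e) ^ 2) = (of_real (\<Sum>e\<in>E. cmod (a e) ^ 2) :: complex)"
    by (simp only: cinner_self)
  thus ?thesis by (simp only: of_real_eq_iff)
qed

lemma psd_decomp:
  fixes \<rho> :: "complex^'n^'n"
  assumes p: "psd \<rho>"
  shows "\<exists>E l. finite E \<and> orthonormal E \<and> (\<forall>e. l e \<ge> 0) \<and>
     \<rho> = outer (\<lambda>e. of_real (l e)) E \<and> psd_sqrt \<rho> = outer (\<lambda>e. of_real (sqrt (l e))) E"
proof -
  have h: "hermitian \<rho>" using p by (simp add: psd_def)
  obtain E where fin: "finite E" and orth: "orthonormal E" and ev: "eigvecs \<rho> E"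
    and c: "\<forall>z. z = (\<Sum>e\<in>E. cinner e z *s e)" using spectral[OF h] by blast
  define l where "l = (\<lambda>e. Re (cinner e (\<rho> *v e)))"
  have l0: "l e \<ge> 0" for e using p by (simp add: psd_def l_def)
  have rho: "\<rho> = outer (\<lambda>e. of_real (l e)) E"
    using decomp[OF ev c] psd_real[OF p] by (simp add: l_def)
  define S where "S = outer (\<lambda>e. of_real (sqrt (l e))) E"
  have "S ** S = outer (\<lambda>e. of_real (sqrt (l e)) * of_real (sqrt (l e))) E"
    unfolding S_def by (rule outer_outer[OF fin orth])
  also have "\<dots> = \<rho>" unfolding rho
    by (rule outer_cong) (simp add: l0 flip: of_real_mult)
  finally have SS: "S ** S = \<rho>" .
  have hS: "hermitian S" unfolding S_def by (rule outer_herm) simp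
  have "cinner x (S *v x) = of_real (\<Sum>e\<in>E. sqrt (l e) * cmod (cinner e x) ^ 2)" for x
    unfolding S_def outer_form by simp
  hence pS: "psd S" using hS by (simp add: psd_def l0 sum_nonneg)
  have "psd_sqrt \<rho> = S"
    using psd_sqrt_char[OF p] pS SS sqrt_unique by metis
  thus ?thesis using fin orth l0 rho S_def by blast
qed

lemma cos_arccos_diff:
  assumes "0 \<le> p" "p \<le> 1" "0 \<le> q" "q \<le> 1"
  shows "cos (arccos p - arccos q) = p * q + sqrt (1 - p^2) * sqrt (1 - q^2)"
  using assms by (simp add: cos_diff sin_arccos)

lemma unit_unitary:
  assumes XX: "cadj X ** X = mat 1" and e: "cinner e e = 1"
  shows "norm (X *v e) = 1"
proof -
  have "cinner (X *v e) (X *v e) = cinner e (cadj X *v (X *v e))"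
    using cinner_adj[of e "cadj X" "X *v e"] by simp
  also have "\<dots> = 1" by (simp add: matrix_vector_mul_assoc XX e)
  finally have "of_real (norm (X *v e) ^ 2) = (1::complex)" by (simp only: cinner_self)
  hence "norm (X *v e) ^ 2 = 1" by (simp only: of_real_eq_1_iff)
  thus ?thesis using norm_ge_zero[of "X *v e"] by (auto simp: power2_eq_1_iff)
qed

lemma sqrt_vec:
  assumes fin: "finite E" and orth: "orthonormal E" and l0: "\<forall>e. l e \<ge> 0"
  shows "norm (outer (\<lambda>e. of_real (sqrt (l e))) E *v (cadj X *v \<phi>)) ^ 2
     = (\<Sum>e\<in>E. l e * cmod (cinner (X *v e) \<phi>) ^ 2)"
proof -
  have "outer (\<lambda>e. of_real (sqrt (l e))) E *v (cadj X *v \<phi>)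
      = (\<Sum>e\<in>E. (of_real (sqrt (l e)) * cinner (X *v e) \<phi>) *s e)"
    unfolding outer_mvec using cinner_adj[of _ "cadj X" \<phi>] by simp
  hence "norm (outer (\<lambda>e. of_real (sqrt (l e))) E *v (cadj X *v \<phi>)) ^ 2
      = (\<Sum>e\<in>E. cmod (of_real (sqrt (l e)) * cinner (X *v e) \<phi>) ^ 2)"
    by (simp add: norm_onb[OF fin orth])
  also have "\<dots> = (\<Sum>e\<in>E. l e * cmod (cinner (X *v e) \<phi>) ^ 2)"
    using l0 by (simp add: norm_mult power_mult_distrib)
  finally show ?thesis .
qed

theorem theorem5:
  fixes \<rho> V W :: "complex^'n^'n" and \<phi> :: "complex^'n"
  assumes "density_op \<rho>" and "unitary V" and "unitary W" and "norm \<phi> = 1"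
  shows "cmod (ctrace (cadj W ** cadj V ** W ** V ** \<rho>))
     \<le> cos (arccos (norm (psd_sqrt \<rho> *v (cadj (V ** W) *v \<phi>)))
            - arccos (norm (psd_sqrt \<rho> *v (cadj (W ** V) *v \<phi>))))"
proof -
  have p: "psd \<rho>" and tr: "ctrace \<rho> = 1" using assms(1) by (auto simp: density_op_def)
  obtain E l where fin: "finite E" and orth: "orthonormal E" and l0: "\<forall>e. l e \<ge> 0"
    and rho: "\<rho> = outer (\<lambda>e. of_real (l e)) E"
    and S: "psd_sqrt \<rho> = outer (\<lambda>e. of_real (sqrt (l e))) E"
    using psd_decomp[OF p] by blast
  define X where "X = V ** W"
  define Y where "Y = W ** V"
  have XX: "cadj X ** X = mat 1"
  proof -
    have "cadj X ** X = cadj W ** ((cadj V ** V) ** W)"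
      by (simp add: X_def cadj_mult matrix_mul_assoc)
    thus ?thesis using assms(2,3) by (simp add: unitary_def)
  qed
  have YY: "cadj Y ** Y = mat 1"
  proof -
    have "cadj Y ** Y = cadj V ** ((cadj W ** W) ** V)"
      by (simp add: Y_def cadj_mult matrix_mul_assoc)
    thus ?thesis using assms(2,3) by (simp add: unitary_def)
  qed
  have ee: "cinner e e = 1" if "e \<in> E" for e using orth that by (simp add: orthonormal_def)
  have nX: "norm (X *v e) = 1" if "e \<in> E" for e by (rule unit_unitary[OF XX ee[OF that]])
  have nY: "norm (Y *v e) = 1" if "e \<in> E" for e by (rule unit_unitary[OF YY ee[OF that]])
  have "ctrace (mat 1 ** \<rho>) = (\<Sum>e\<in>E. of_real (l e) * cinner e (mat 1 *v e))"
    by (subst rho) (rule ctrace_outer)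
  also have "\<dots> = of_real (\<Sum>e\<in>E. l e)" using ee by simp
  finally have sum1: "(\<Sum>e\<in>E. l e) = 1" using tr by (metis matrix_mul_lid of_real_eq_1_iff)
  have "cadj W ** cadj V ** W ** V ** \<rho> = (cadj X ** Y) ** outer (\<lambda>e. of_real (l e)) E"
    using rho by (simp add: X_def Y_def cadj_mult matrix_mul_assoc)
  hence F: "ctrace (cadj W ** cadj V ** W ** V ** \<rho>) = (\<Sum>e\<in>E. of_real (l e) * cinner (X *v e) (Y *v e))"
    using cinner_adj[of _ "cadj X"] by (simp add: ctrace_outer matrix_vector_mul_assoc[symmetric])
  define pp where "pp = norm (psd_sqrt \<rho> *v (cadj (V ** W) *v \<phi>))"
  define qq where "qq = norm (psd_sqrt \<rho> *v (cadj (W ** V) *v \<phi>))"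
  have pp2: "pp^2 = (\<Sum>e\<in>E. l e * cmod (cinner (X *v e) \<phi>) ^ 2)"
    unfolding pp_def S X_def by (rule sqrt_vec[OF fin orth l0])
  have qq2: "qq^2 = (\<Sum>e\<in>E. l e * cmod (cinner (Y *v e) \<phi>) ^ 2)"
    unfolding qq_def S Y_def by (rule sqrt_vec[OF fin orth l0])
  have le1: "(\<Sum>e\<in>E. l e * cmod (cinner (Z *v e) \<phi>) ^ 2) \<le> 1"
    if nZ: "\<And>e. e \<in> E \<Longrightarrow> norm (Z *v e) = 1" for Z
  proof -
    have "(\<Sum>e\<in>E. l e * cmod (cinner (Z *v e) \<phi>) ^ 2) \<le> (\<Sum>e\<in>E. l e)"
    proof (rule sum_mono)
      fix e assume e: "e \<in> E"
      have "cmod (cinner (Z *v e) \<phi>) \<le> 1"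
        using cauchy_schwarz[of "Z *v e" \<phi>] nZ[OF e] assms(4) by simp
      hence "cmod (cinner (Z *v e) \<phi>) ^ 2 \<le> 1" by (simp add: power_le_one)
      thus "l e * cmod (cinner (Z *v e) \<phi>) ^ 2 \<le> l e"
        using l0 by (simp add: mult_left_le)
    qed
    thus ?thesis using sum1 by simp
  qed
  have pb: "pp \<le> 1"
    using le1[OF nX] pp2 by (metis abs_le_square_iff abs_of_nonneg norm_ge_zero pp_def one_power2 abs_one)
  have qb: "qq \<le> 1"
    using le1[OF nY] qq2 by (metis abs_le_square_iff abs_of_nonneg norm_ge_zero qq_def one_power2 abs_one)
  have "cmod (ctrace (cadj W ** cadj V ** W ** V ** \<rho>)) \<le> pp * qq + sqrt (1 - pp^2) * sqrt (1 - qq^2)"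
    unfolding F
    by (rule key[OF fin _ sum1 nX nY assms(4) _ pp2 _ qq2]) (simp_all add: l0 pp_def qq_def)
  also have "\<dots> = cos (arccos pp - arccos qq)"
    using pb qb by (simp add: cos_arccos_diff pp_def qq_def)
  finally show ?thesis by (simp add: pp_def qq_def)
qed

end
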